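(* Let $\overline{C}(\alpha,N)$ be as defined in the context. Then: (1) For real $0\le\alpha\le2$ and integers $N\ge2$, $\overline{C}(\alpha,N)=\overline{C}(2-\alpha,N)\ge1$. (2) For real $0\le\alpha_1<\alpha_2\le2$, $0<\theta<1$ and positive integers $N$, $\overline{C}(\theta\alpha_1+(1-\theta)\alpha_2,N)\le\overline{C}(\alpha_1,N)^{\theta}\,\overline{C}(\alpha_2,N)^{1-\theta}$. (3) For real $0\le\alpha_1<\alpha_2\le1$ and positive integers $N$, $\overline{C}(\alpha_1,N)\ge\overline{C}(\alpha_2,N)$. (4) For real $0\le\alpha<\tfrac12$ there is a constant $c_\alpha>0$ such that $\overline{C}(\alpha,N)\ge c_\alpha N^{\frac12-\alpha}$ for all integers $N\ge2$.
   Context: For a strictly increasing sequence $(\lambda_k)_{k=-\infty}^{\infty}$ of real numbers, put $\delta_k:=\min\{\lambda_k-\lambda_{k-1},\lambda_{k+1}-\lambda_k\}$. For $0\le\alpha\le2$ and a positive integer $N$, let $\overline{C}(\alpha,N)$ be the minimum of all constants $C(\alpha,N)$ such that $$\sum_{m=1}^N\sum_{\substack{n=1\\ n\ne m}}^N\frac{\delta_m^{2-\alpha}\delta_n^{\alpha}t_mt_n}{(\lambda_m-\lambda_n)^2}\le C(\alpha,N)\sum_{n=1}^N t_n^2$$ holds for every strictly increasing real sequence $(\lambda_k)_{k\in\mathbb Z}$ and all nonnegative reals $t_1,\dots,t_N$. *)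

theory Defs
  imports Complex_Main
begin

definition gap :: "(int \<Rightarrow> real) \<Rightarrow> int \<Rightarrow> real" where
  "gap lam k = min (lam k - lam (k - 1)) (lam (k + 1) - lam k)"

definition admissible_const :: "real \<Rightarrow> nat \<Rightarrow> real \<Rightarrow> bool" where
  "admissible_const \<alpha> N C \<longleftrightarrow>
     (\<forall>(lam :: int \<Rightarrow> real) (t :: int \<Rightarrow> real).
        strict_mono lam \<longrightarrow> (\<forall>n\<in>{1..int N}. 0 \<le> t n) \<longrightarrow>
        (\<Sum>m\<in>{1..int N}. \<Sum>n\<in>{1..int N}-{m}.
            gap lam m powr (2 - \<alpha>) * gap lam n powr \<alpha> * t m * t n / (lam m - lam n)^2)
        \<le> C * (\<Sum>n\<in>{1..int N}. (t n)^2))"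

definition Cbar :: "real \<Rightarrow> nat \<Rightarrow> real" where
  "Cbar \<alpha> N = Inf {C. admissible_const \<alpha> N C}"

end

theory Submission
  imports Defs "HOL-Analysis.Convex"
begin


definition trm :: "real \<Rightarrow> (int \<Rightarrow> real) \<Rightarrow> (int \<Rightarrow> real) \<Rightarrow> int \<Rightarrow> int \<Rightarrow> real" where
 "trm \<alpha> lam t m n = gap lam m powr (2 - \<alpha>) * gap lam n powr \<alpha> * t m * t n / (lam m - lam n)^2"

definition Qf :: "real \<Rightarrow> nat \<Rightarrow> (int \<Rightarrow> real) \<Rightarrow> (int \<Rightarrow> real) \<Rightarrow> real" where
 "Qf \<alpha> N lam t = (\<Sum>m\<in>{1..int N}. \<Sum>n\<in>{1..int N}-{m}. trm \<alpha> lam t m n)"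

definition Sf :: "nat \<Rightarrow> (int \<Rightarrow> real) \<Rightarrow> real" where
 "Sf N t = (\<Sum>n\<in>{1..int N}. (t n)^2)"

lemma adm_iff: "admissible_const \<alpha> N C \<longleftrightarrow>
   (\<forall>lam t. strict_mono lam \<longrightarrow> (\<forall>n\<in>{1..int N}. 0 \<le> t n) \<longrightarrow> Qf \<alpha> N lam t \<le> C * Sf N t)"
  unfolding admissible_const_def Qf_def Sf_def trm_def by simp

lemma gap_pos: "strict_mono lam \<Longrightarrow> gap lam k > 0"
  unfolding gap_def by (simp add: strict_mono_less)

lemma gap_le: assumes "strict_mono lam" "n \<noteq> m" shows "gap lam m \<le> \<bar>lam m - lam n\<bar>"
proof (cases "n < m")
  case True
  then have "lam n \<le> lam (m-1)" using assms by (simp add: strict_mono_less_eq)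
  moreover have "lam n < lam m" using True assms by (simp add: strict_mono_less)
  ultimately show ?thesis unfolding gap_def by auto
next
  case False
  then have "m < n" using assms by simp
  then have "lam (m+1) \<le> lam n" using assms by (simp add: strict_mono_less_eq)
  moreover have "lam m < lam n" using \<open>m<n\<close> assms by (simp add: strict_mono_less)
  ultimately show ?thesis unfolding gap_def by auto
qed

lemma trm_nonneg: "strict_mono lam \<Longrightarrow> 0 \<le> t m \<Longrightarrow> 0 \<le> t n \<Longrightarrow> 0 \<le> trm \<alpha> lam t m n"
  unfolding trm_def by simp

lemma Qf_nonneg: "strict_mono lam \<Longrightarrow> (\<forall>n\<in>{1..int N}. 0 \<le> t n) \<Longrightarrow> 0 \<le> Qf \<alpha> N lam t"
  unfolding Qf_def by (intro sum_nonneg) (auto intro!: trm_nonneg)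

lemma Sf_nonneg: "0 \<le> Sf N t"
  unfolding Sf_def by (simp add: sum_nonneg)

lemma trm_le: assumes "strict_mono lam" "n \<noteq> m" "0 \<le> \<alpha>" "\<alpha> \<le> 2" "0 \<le> t m" "0 \<le> t n"
  shows "trm \<alpha> lam t m n \<le> t m * t n"
proof -
  define d where "d = \<bar>lam m - lam n\<bar>"
  have dpos: "d > 0" unfolding d_def using assms strict_mono_eq[OF assms(1)] by auto
  have g1: "gap lam m powr (2 - \<alpha>) \<le> d powr (2 - \<alpha>)"
    using gap_le[OF assms(1,2)] gap_pos[OF assms(1)] assms(4) unfolding d_def
    by (intro powr_mono2) (auto simp: less_imp_le)
  have g2: "gap lam n powr \<alpha> \<le> d powr \<alpha>"
    using gap_le[OF assms(1), of m n] assms(2) gap_pos[OF assms(1)] assms(3) unfolding d_def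
    by (intro powr_mono2) (auto simp: less_imp_le abs_minus_commute)
  have "gap lam m powr (2 - \<alpha>) * gap lam n powr \<alpha> \<le> d powr (2 - \<alpha>) * d powr \<alpha>"
    using g1 g2 by (intro mult_mono) auto
  also have "\<dots> = d powr ((2 - \<alpha>) + \<alpha>)" by (simp only: powr_add)
  also have "\<dots> = d powr (2::real)" by simp
  also have "\<dots> = d^2" using dpos by (metis of_nat_numeral powr_realpow)
  finally have c: "gap lam m powr (2 - \<alpha>) * gap lam n powr \<alpha> \<le> d^2" .
  have "(lam m - lam n)^2 = d^2" unfolding d_def by simp
  then have "trm \<alpha> lam t m n = (gap lam m powr (2 - \<alpha>) * gap lam n powr \<alpha>) * (t m * t n) / d^2"
    unfolding trm_def by simp
  also have "\<dots> \<le> d^2 * (t m * t n) / d^2"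
    using c assms by (intro divide_right_mono mult_right_mono) auto
  also have "\<dots> = t m * t n" using dpos by simp
  finally show ?thesis .
qed

lemma adm_N: assumes "0 \<le> \<alpha>" "\<alpha> \<le> 2" shows "admissible_const \<alpha> N (real N)"
  unfolding adm_iff
proof (intro allI impI)
  fix lam t :: "int \<Rightarrow> real" assume sm: "strict_mono lam" and tn: "\<forall>n\<in>{1..int N}. 0 \<le> t n"
  let ?A = "{1..int N}"
  have "Qf \<alpha> N lam t \<le> (\<Sum>m\<in>?A. \<Sum>n\<in>?A-{m}. ((t m)^2 + (t n)^2)/2)"
    unfolding Qf_def
  proof (intro sum_mono)
    fix m n assume "m \<in> ?A" "n \<in> ?A - {m}"
    then have "trm \<alpha> lam t m n \<le> t m * t n" using trm_le[OF sm _ assms] tn by auto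
    also have "\<dots> \<le> ((t m)^2 + (t n)^2)/2"
    proof -
      have "0 \<le> (t m - t n)^2" by simp
      then show ?thesis by (simp add: power2_eq_square algebra_simps)
    qed
    finally show "trm \<alpha> lam t m n \<le> ((t m)^2 + (t n)^2)/2" .
  qed
  also have "\<dots> \<le> (\<Sum>m\<in>?A. \<Sum>n\<in>?A. ((t m)^2 + (t n)^2)/2)"
    by (intro sum_mono sum_mono2) auto
  also have "\<dots> = real (card ?A) * Sf N t"
    unfolding Sf_def by (simp add: sum.distrib add_divide_distrib sum_divide_distrib[symmetric] sum_distrib_left[symmetric])
  finally show "Qf \<alpha> N lam t \<le> real N * Sf N t" by simp
qed

lemma strict_mono_int: "strict_mono (real_of_int)"
  by (simp add: strict_mono_def)

lemma adm_nonneg: assumes "admissible_const \<alpha> N C" "N \<ge> 1" shows "0 \<le> C"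
proof -
  define t :: "int \<Rightarrow> real" where "t = (\<lambda>n. if n = 1 then 1 else 0)"
  have "Qf \<alpha> N real_of_int t = 0"
    unfolding Qf_def by (intro sum.neutral ballI) (auto simp: trm_def t_def)
  moreover have "Sf N t = (\<Sum>n\<in>{1..int N}. if n = 1 then 1 else 0)"
    unfolding Sf_def t_def by (intro sum.cong) auto
  then have "Sf N t = 1" using assms(2) by simp
  ultimately show ?thesis using assms(1) unfolding adm_iff
    by (metis mult.right_neutral strict_mono_int t_def order.refl zero_le_one)
qed

lemma Cbar_le: assumes "admissible_const \<alpha> N C" "N \<ge> 1" shows "Cbar \<alpha> N \<le> C"
  unfolding Cbar_def using assms adm_nonneg by (intro cInf_lower) (auto simp: bdd_below_def)

lemma Cbar_adm: assumes "0 \<le> \<alpha>" "\<alpha> \<le> 2" "N \<ge> 1" shows "admissible_const \<alpha> N (Cbar \<alpha> N)"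
  unfolding adm_iff
proof (intro allI impI)
  fix lam t :: "int \<Rightarrow> real" assume sm: "strict_mono lam" and tn: "\<forall>n\<in>{1..int N}. 0 \<le> t n"
  have ne: "{C. admissible_const \<alpha> N C} \<noteq> {}" using adm_N[OF assms(1,2)] by auto
  show "Qf \<alpha> N lam t \<le> Cbar \<alpha> N * Sf N t"
  proof (cases "Sf N t = 0")
    case True
    then have "\<forall>n\<in>{1..int N}. t n = 0" unfolding Sf_def
      using sum_nonneg_eq_0_iff[of "{1..int N}" "\<lambda>n. (t n)^2"] by simp
    then have "Qf \<alpha> N lam t = 0" unfolding Qf_def trm_def by (intro sum.neutral ballI) auto
    then show ?thesis using True by simp
  next
    case False
    then have Sp: "Sf N t > 0" using Sf_nonneg less_eq_real_def by auto
    have "Qf \<alpha> N lam t / Sf N t \<le> Cbar \<alpha> N" unfolding Cbar_def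
    proof (rule cInf_greatest[OF ne])
      fix C assume "C \<in> {C. admissible_const \<alpha> N C}"
      then have "Qf \<alpha> N lam t \<le> C * Sf N t" using sm tn unfolding adm_iff by auto
      then show "Qf \<alpha> N lam t / Sf N t \<le> C" using Sp by (simp add: divide_le_eq)
    qed
    then show ?thesis using Sp by (simp add: divide_le_eq)
  qed
qed

lemma Qf_sym: "Qf \<alpha> N lam t = Qf (2 - \<alpha>) N lam t"
proof -
  let ?A = "{1..int N}"
  have e: "\<And>m. ?A - {m} = {n. n \<in> ?A \<and> m \<noteq> n}" by auto
  have e2: "\<And>n. ?A - {n} = {m. m \<in> ?A \<and> m \<noteq> n}" by auto
  have "Qf \<alpha> N lam t = (\<Sum>m\<in>?A. \<Sum>n\<in>{n. n \<in> ?A \<and> m \<noteq> n}. trm \<alpha> lam t m n)"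
    unfolding Qf_def e by simp
  also have "\<dots> = (\<Sum>n\<in>?A. \<Sum>m\<in>{m. m \<in> ?A \<and> m \<noteq> n}. trm \<alpha> lam t m n)"
    by (rule sum.swap_restrict) auto
  also have "\<dots> = (\<Sum>n\<in>?A. \<Sum>m\<in>?A-{n}. trm (2 - \<alpha>) lam t n m)"
    unfolding e2[symmetric] trm_def by (intro sum.cong refl) (simp add: power2_commute)
  finally show ?thesis unfolding Qf_def .
qed

lemma Cbar_sym: "Cbar \<alpha> N = Cbar (2 - \<alpha>) N"
  unfolding Cbar_def adm_iff using Qf_sym by metis

lemma Cbar_ge1: assumes "0 \<le> \<alpha>" "\<alpha> \<le> 2" "N \<ge> 2" shows "Cbar \<alpha> N \<ge> 1"
proof -
  let ?A = "{1..int N}"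
  define t :: "int \<Rightarrow> real" where "t = (\<lambda>n. if n \<in> {1,2} then 1 else 0)"
  have sub: "{1,2} \<subseteq> ?A" using assms(3) by auto
  have tn: "\<forall>n\<in>?A. 0 \<le> t n" unfolding t_def by auto
  have nn: "\<And>m n. 0 \<le> trm \<alpha> real_of_int t m n"
    by (rule trm_nonneg[OF strict_mono_int]) (auto simp: t_def)
  have "(\<Sum>m\<in>{1,2}. \<Sum>n\<in>{1,2}-{m}. trm \<alpha> real_of_int t m n) \<le> (\<Sum>m\<in>{1,2}. \<Sum>n\<in>?A-{m}. trm \<alpha> real_of_int t m n)"
    using sub by (intro sum_mono sum_mono2) (auto intro: nn)
  also have "\<dots> \<le> Qf \<alpha> N real_of_int t"
    unfolding Qf_def using sub by (intro sum_mono2) (auto intro!: sum_nonneg nn)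
  finally have q: "(\<Sum>m\<in>{1,2}. \<Sum>n\<in>{1,2}-{m}. trm \<alpha> real_of_int t m n) \<le> Qf \<alpha> N real_of_int t" .
  have g: "\<And>k. gap real_of_int k = 1" unfolding gap_def by simp
  have "(\<Sum>m\<in>{1::int,2}. \<Sum>n\<in>{1,2}-{m}. trm \<alpha> real_of_int t m n) = 2"
    by (simp add: trm_def g t_def insert_Diff_if)
  with q have q2: "2 \<le> Qf \<alpha> N real_of_int t" by simp
  have "Sf N t = (\<Sum>n\<in>?A. if n \<in> {1,2} then 1 else 0)"
    unfolding Sf_def t_def by (intro sum.cong) auto
  also have "\<dots> = card (?A \<inter> {1,2})" by (simp add: sum.If_cases Collect_disj_eq insert_commute)
  also have "?A \<inter> {1,2} = {1,2}" using sub by auto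
  finally have s: "Sf N t = 2" by simp
  have "Qf \<alpha> N real_of_int t \<le> Cbar \<alpha> N * Sf N t"
    using Cbar_adm[OF assms(1,2)] assms(3) tn strict_mono_int unfolding adm_iff by auto
  with q2 s show ?thesis by simp
qed

lemma holder2:
  fixes x y :: "'a \<Rightarrow> real"
  assumes "finite I" "\<And>i. i \<in> I \<Longrightarrow> 0 \<le> x i" "\<And>i. i \<in> I \<Longrightarrow> 0 \<le> y i" "0 < \<theta>" "\<theta> < 1"
  shows "(\<Sum>i\<in>I. x i powr \<theta> * y i powr (1 - \<theta>)) \<le> (\<Sum>i\<in>I. x i) powr \<theta> * (\<Sum>i\<in>I. y i) powr (1 - \<theta>)"
proof -
  define X where "X = (\<Sum>i\<in>I. x i)"
  define Y where "Y = (\<Sum>i\<in>I. y i)"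
  have X0: "X \<ge> 0" "Y \<ge> 0" unfolding X_def Y_def using assms by (auto intro: sum_nonneg)
  show ?thesis
  proof (cases "X = 0 \<or> Y = 0")
    case True
    then have "\<forall>i\<in>I. x i = 0 \<or> y i = 0" unfolding X_def Y_def
      using sum_nonneg_eq_0_iff[OF assms(1), of x] sum_nonneg_eq_0_iff[OF assms(1), of y] assms(2,3) by auto
    then have "(\<Sum>i\<in>I. x i powr \<theta> * y i powr (1 - \<theta>)) = 0"
      by (intro sum.neutral) auto
    then show ?thesis using X0 unfolding X_def Y_def by simp
  next
    case False
    then have Xp: "X > 0" "Y > 0" using X0 by auto
    have "(\<Sum>i\<in>I. (x i / X) powr \<theta> * (y i / Y) powr (1 - \<theta>)) \<le> (\<Sum>i\<in>I. \<theta> * (x i / X) + (1 - \<theta>) * (y i / Y))"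
    proof (intro sum_mono)
      fix i assume i: "i \<in> I"
      show "(x i / X) powr \<theta> * (y i / Y) powr (1 - \<theta>) \<le> \<theta> * (x i / X) + (1 - \<theta>) * (y i / Y)"
      proof (cases "x i = 0 \<or> y i = 0")
        case True then show ?thesis using i assms Xp by (auto intro!: add_nonneg_nonneg mult_nonneg_nonneg)
      next
        case False
        then show ?thesis using i assms Xp
          by (intro Youngs_inequality_0) (auto simp: less_le)
      qed
    qed
    also have "\<dots> = \<theta> * ((\<Sum>i\<in>I. x i) / X) + (1 - \<theta>) * ((\<Sum>i\<in>I. y i) / Y)"
      by (simp only: sum.distrib flip: sum_distrib_left sum_divide_distrib)
    also have "\<dots> = \<theta> * (X / X) + (1 - \<theta>) * (Y / Y)" unfolding X_def Y_def ..
    also have "\<dots> = 1" using Xp by simp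
    finally have h: "(\<Sum>i\<in>I. (x i / X) powr \<theta> * (y i / Y) powr (1 - \<theta>)) \<le> 1" .
    have "(\<Sum>i\<in>I. (x i / X) powr \<theta> * (y i / Y) powr (1 - \<theta>))
        = (\<Sum>i\<in>I. x i powr \<theta> * y i powr (1 - \<theta>)) / (X powr \<theta> * Y powr (1 - \<theta>))"
      unfolding sum_divide_distrib using assms Xp by (intro sum.cong refl) (simp add: powr_divide)
    with h have "(\<Sum>i\<in>I. x i powr \<theta> * y i powr (1 - \<theta>)) / (X powr \<theta> * Y powr (1 - \<theta>)) \<le> 1" by simp
    moreover have "X powr \<theta> * Y powr (1 - \<theta>) > 0" using Xp by simp
    ultimately show ?thesis unfolding X_def[symmetric] Y_def[symmetric] by (simp add: divide_le_eq)
  qed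
qed

lemma trm_interp:
  assumes sm: "strict_mono lam" and "0 \<le> t m" "0 \<le> t n" and al: "\<alpha> = \<theta> * \<alpha>1 + (1 - \<theta>) * \<alpha>2"
  shows "trm \<alpha> lam t m n = trm \<alpha>1 lam t m n powr \<theta> * trm \<alpha>2 lam t m n powr (1 - \<theta>)"
proof -
  define a where "a = gap lam m"
  define b where "b = gap lam n"
  define w where "w = t m * t n / (lam m - lam n)^2"
  have a: "a > 0" "b > 0" unfolding a_def b_def using gap_pos[OF sm] by auto
  have w: "w \<ge> 0" unfolding w_def using assms by simp
  have T: "\<And>\<beta>. trm \<beta> lam t m n = a powr (2 - \<beta>) * b powr \<beta> * w"
    unfolding trm_def a_def b_def w_def by simp
  have "trm \<alpha>1 lam t m n powr \<theta> * trm \<alpha>2 lam t m n powr (1 - \<theta>)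
     = (a powr ((2 - \<alpha>1) * \<theta>) * a powr ((2 - \<alpha>2) * (1 - \<theta>))) * (b powr (\<alpha>1 * \<theta>) * b powr (\<alpha>2 * (1 - \<theta>)))
       * (w powr \<theta> * w powr (1 - \<theta>))"
    unfolding T using a w by (simp add: powr_mult powr_powr)
  also have "\<dots> = a powr (2 - \<alpha>) * b powr \<alpha> * w powr 1"
    unfolding al by (simp only: powr_add[symmetric]) (simp add: algebra_simps)
  also have "\<dots> = trm \<alpha> lam t m n" using w T by simp
  finally show ?thesis by simp
qed

definition SigS :: "nat \<Rightarrow> (int \<times> int) set" where
  "SigS N = Sigma {1..int N} (\<lambda>m. {1..int N} - {m})"

lemma SigS_finite: "finite (SigS N)" unfolding SigS_def by auto

lemma Qf_Sigma: "Qf \<beta> N lam t = (\<Sum>p\<in>SigS N. trm \<beta> lam t (fst p) (snd p))"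
  unfolding Qf_def SigS_def by (subst sum.Sigma) (auto simp: case_prod_beta)

lemma Cbar_interp:
  assumes "0 \<le> \<alpha>1" "\<alpha>1 \<le> 2" "0 \<le> \<alpha>2" "\<alpha>2 \<le> 2" "0 < \<theta>" "\<theta> < 1" "N \<ge> 1"
  shows "Cbar (\<theta> * \<alpha>1 + (1 - \<theta>) * \<alpha>2) N \<le> Cbar \<alpha>1 N powr \<theta> * Cbar \<alpha>2 N powr (1 - \<theta>)"
proof -
  define \<alpha> where "\<alpha> = \<theta> * \<alpha>1 + (1 - \<theta>) * \<alpha>2"
  define C1 where "C1 = Cbar \<alpha>1 N"
  define C2 where "C2 = Cbar \<alpha>2 N"
  have A1: "admissible_const \<alpha>1 N C1" unfolding C1_def using Cbar_adm assms by auto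
  have A2: "admissible_const \<alpha>2 N C2" unfolding C2_def using Cbar_adm assms by auto
  have C0: "C1 \<ge> 0" "C2 \<ge> 0" using adm_nonneg A1 A2 assms by auto
  have "admissible_const \<alpha> N (C1 powr \<theta> * C2 powr (1 - \<theta>))"
    unfolding adm_iff
  proof (intro allI impI)
    fix lam t :: "int \<Rightarrow> real" assume sm: "strict_mono lam" and tn: "\<forall>n\<in>{1..int N}. 0 \<le> t n"
    have tn': "\<And>p. p \<in> SigS N \<Longrightarrow> 0 \<le> t (fst p) \<and> 0 \<le> t (snd p)"
      using tn unfolding SigS_def by auto
    have "Qf \<alpha> N lam t = (\<Sum>p\<in>SigS N. trm \<alpha>1 lam t (fst p) (snd p) powr \<theta> * trm \<alpha>2 lam t (fst p) (snd p) powr (1 - \<theta>))"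
      unfolding Qf_Sigma using tn' by (intro sum.cong refl trm_interp[OF sm]) (auto simp: \<alpha>_def)
    also have "\<dots> \<le> Qf \<alpha>1 N lam t powr \<theta> * Qf \<alpha>2 N lam t powr (1 - \<theta>)"
      unfolding Qf_Sigma using tn' assms
      by (intro holder2 SigS_finite trm_nonneg[OF sm]) auto
    also have "\<dots> \<le> (C1 * Sf N t) powr \<theta> * (C2 * Sf N t) powr (1 - \<theta>)"
      using A1 A2 sm tn Qf_nonneg[OF sm tn] Qf_nonneg[OF sm tn] assms unfolding adm_iff
      by (intro mult_mono powr_mono2) auto
    also have "\<dots> = C1 powr \<theta> * C2 powr (1 - \<theta>) * (Sf N t powr \<theta> * Sf N t powr (1 - \<theta>))"
      using C0 Sf_nonneg[of N t] by (simp add: powr_mult)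
    also have "Sf N t powr \<theta> * Sf N t powr (1 - \<theta>) = Sf N t"
      using Sf_nonneg[of N t] by (simp flip: powr_add)
    finally show "Qf \<alpha> N lam t \<le> C1 powr \<theta> * C2 powr (1 - \<theta>) * Sf N t" .
  qed
  then show ?thesis using Cbar_le assms unfolding \<alpha>_def C1_def C2_def by auto
qed

lemma Cbar_nonneg: "0 \<le> \<alpha> \<Longrightarrow> \<alpha> \<le> 2 \<Longrightarrow> N \<ge> 1 \<Longrightarrow> 0 \<le> Cbar \<alpha> N"
  using Cbar_adm adm_nonneg by blast

lemma hh: "(D::real) \<noteq> 0 \<Longrightarrow> x / D * a + (1 - x / D) * c = (x * a + (D - x) * c) / D"
  by (simp add: field_simps)

lemma Cbar_mono:
  assumes "0 \<le> \<alpha>1" "\<alpha>1 < \<alpha>2" "\<alpha>2 \<le> 1" "N \<ge> 1"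
  shows "Cbar \<alpha>2 N \<le> Cbar \<alpha>1 N"
proof -
  define \<theta> where "\<theta> = (2 - \<alpha>1 - \<alpha>2) / (2 - 2 * \<alpha>1)"
  have d: "2 - 2 * \<alpha>1 > 0" using assms by simp
  have th: "0 < \<theta>" "\<theta> < 1" unfolding \<theta>_def using assms d by (auto simp: divide_simps)
  have eq: "\<theta> * \<alpha>1 + (1 - \<theta>) * (2 - \<alpha>1) = \<alpha>2"
  proof -
    have ne: "2 - 2 * \<alpha>1 \<noteq> 0" using d by simp
    have "(2 - \<alpha>1 - \<alpha>2) * \<alpha>1 + ((2 - 2*\<alpha>1) - (2 - \<alpha>1 - \<alpha>2)) * (2 - \<alpha>1) = \<alpha>2 * (2 - 2 * \<alpha>1)" by algebra
    then show ?thesis unfolding \<theta>_def hh[OF ne] using ne by simp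
  qed
  have "Cbar \<alpha>2 N \<le> Cbar \<alpha>1 N powr \<theta> * Cbar (2 - \<alpha>1) N powr (1 - \<theta>)"
    using Cbar_interp[of \<alpha>1 "2 - \<alpha>1" \<theta> N] assms th eq by auto
  also have "\<dots> = Cbar \<alpha>1 N powr \<theta> * Cbar \<alpha>1 N powr (1 - \<theta>)"
    using Cbar_sym[of \<alpha>1 N] by simp
  also have "\<dots> = Cbar \<alpha>1 N"
    using Cbar_nonneg[of \<alpha>1 N] assms by (simp flip: powr_add)
  finally show ?thesis .
qed

lemma Cbar_lower:
  assumes "0 \<le> \<alpha>" "\<alpha> \<le> 2" "N \<ge> 2"
  shows "Cbar \<alpha> N \<ge> 1/16 * real N powr (1/2 - \<alpha>)"
proof -
  let ?A = "{1..int N}"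
  define L :: "int \<Rightarrow> int" where "L = (\<lambda>k. if k < int N then k else int N * (k - int N + 1) + int N - 1)"
  define lam :: "int \<Rightarrow> real" where "lam = (\<lambda>k. real_of_int (L k))"
  define t :: "int \<Rightarrow> real" where "t = (\<lambda>n. if n < int N then 1 else sqrt (real N))"
  have Npos: "int N \<ge> 2" "real N \<ge> 2" using assms by auto
  have Lm: "L x < L y" if "x < y" for x y
  proof (cases "y < int N")
    case True then show ?thesis using that unfolding L_def by auto
  next
    case False
    show ?thesis
    proof (cases "x < int N")
      case True
      have "int N * 1 \<le> int N * (y - int N + 1)" using False Npos by (intro mult_left_mono) auto
      moreover have "L x = x" "L y = int N * (y - int N + 1) + int N - 1" using True False unfolding L_def by auto
      ultimately show ?thesis using True Npos by linarith
    next
      case False2: False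
      have "int N * (x - int N + 1) < int N * (y - int N + 1)" using that Npos by (intro mult_strict_left_mono) auto
      then show ?thesis using False False2 unfolding L_def by auto
    qed
  qed
  have sm: "strict_mono lam" unfolding lam_def strict_mono_def using Lm by simp
  have tn: "\<forall>n\<in>?A. 0 \<le> t n" unfolding t_def by auto
  have gN: "gap lam (int N) = real N" unfolding gap_def lam_def L_def by simp
  have gn: "gap lam n = 1" if "n \<in> ?A - {int N}" for n
  proof -
    have "n < int N" using that by auto
    show ?thesis
    proof (cases "n + 1 < int N")
      case True then show ?thesis unfolding gap_def lam_def L_def using \<open>n < int N\<close> by auto
    next
      case False
      then have "n = int N - 1" using \<open>n < int N\<close> by simp
      then show ?thesis unfolding gap_def lam_def L_def using Npos by (auto simp: min_def)
    qed
  qed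
  have key: "trm \<alpha> lam t (int N) n \<ge> real N powr (1/2 - \<alpha>) / 4" if n: "n \<in> ?A - {int N}" for n
  proof -
    have nl: "n < int N" "n \<ge> 1" using n by auto
    have d: "lam (int N) - lam n = real (2 * N - 1) - real_of_int n"
      unfolding lam_def L_def using nl Npos by auto
    have d1: "0 < (lam (int N) - lam n)^2" using d nl by auto
    have d2: "(lam (int N) - lam n)^2 \<le> (2 * real N)^2"
      unfolding d using nl Npos by (intro power_mono) auto
    have e1: "trm \<alpha> lam t (int N) n = real N powr (2 - \<alpha>) * sqrt (real N) / (lam (int N) - lam n)^2"
      unfolding trm_def gN gn[OF n] using nl by (simp add: t_def)
    have e2: "real N powr (2 - \<alpha>) * sqrt (real N) / (2 * real N)^2 \<le> real N powr (2 - \<alpha>) * sqrt (real N) / (lam (int N) - lam n)^2"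
      using d1 d2 Npos by (intro divide_left_mono) auto
    have e3: "real N powr (2 - \<alpha>) * sqrt (real N) / (2 * real N)^2 = real N powr (2 - \<alpha> + 1/2 - 2) / 4"
      using Npos by (simp add: powr_add powr_diff powr_half_sqrt[symmetric] power2_eq_square powr_realpow[symmetric])
    have e4: "2 - \<alpha> + 1/2 - 2 = 1/2 - \<alpha>" by simp
    show ?thesis unfolding e1 using e2 e3[unfolded e4] by linarith
  qed
  have "Qf \<alpha> N lam t \<ge> (\<Sum>n\<in>?A-{int N}. trm \<alpha> lam t (int N) n)"
    unfolding Qf_def using Npos tn
    by (intro member_le_sum sum_nonneg) (auto intro!: trm_nonneg[OF sm])
  moreover have "(\<Sum>n\<in>?A-{int N}. trm \<alpha> lam t (int N) n) \<ge> (\<Sum>n\<in>?A-{int N}. real N powr (1/2 - \<alpha>) / 4)"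
    using key by (intro sum_mono) auto
  moreover have "(\<Sum>n\<in>?A-{int N}. real N powr (1/2 - \<alpha>) / 4) = (real N - 1) * (real N powr (1/2 - \<alpha>) / 4)"
    using Npos by (simp add: card_Diff_singleton of_nat_diff)
  ultimately have Q: "Qf \<alpha> N lam t \<ge> (real N - 1) * (real N powr (1/2 - \<alpha>) / 4)" by linarith
  have "Sf N t = t (int N)^2 + (\<Sum>n\<in>?A-{int N}. t n ^2)"
    unfolding Sf_def using Npos by (subst sum.remove[of _ "int N"]) auto
  also have "(\<Sum>n\<in>?A-{int N}. t n ^2) = (\<Sum>n\<in>?A-{int N}. 1)"
    by (intro sum.cong) (auto simp: t_def)
  finally have S: "Sf N t = 2 * real N - 1"
    using Npos by (simp add: t_def card_Diff_singleton of_nat_diff)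
  have "Qf \<alpha> N lam t \<le> Cbar \<alpha> N * Sf N t"
    using Cbar_adm[OF assms(1,2)] assms(3) sm tn unfolding adm_iff by auto
  with Q S have main: "(real N - 1) * (real N powr (1/2 - \<alpha>) / 4) \<le> Cbar \<alpha> N * (2 * real N - 1)" by simp
  have C0: "Cbar \<alpha> N \<ge> 0" using Cbar_nonneg assms by auto
  have P: "real N powr (1/2 - \<alpha>) > 0" using Npos by simp
  have "(real N / 2) * (real N powr (1/2 - \<alpha>) / 4) \<le> (real N - 1) * (real N powr (1/2 - \<alpha>) / 4)"
    using Npos P by (intro mult_right_mono) auto
  also have "\<dots> \<le> Cbar \<alpha> N * (2 * real N)" using main C0 by (smt (verit) mult_left_mono)
  finally have "(real N / 2) * (real N powr (1/2 - \<alpha>) / 4) \<le> Cbar \<alpha> N * (2 * real N)" .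
  then show ?thesis using Npos by (simp add: field_simps)
qed


theorem proposition3:
  shows "(\<forall>(\<alpha>::real) (N::nat). 0 \<le> \<alpha> \<and> \<alpha> \<le> 2 \<and> N \<ge> 2 \<longrightarrow>
            Cbar \<alpha> N = Cbar (2 - \<alpha>) N \<and> Cbar \<alpha> N \<ge> 1)
       \<and> (\<forall>(\<alpha>1::real) \<alpha>2 \<theta> (N::nat). 0 \<le> \<alpha>1 \<and> \<alpha>1 < \<alpha>2 \<and> \<alpha>2 \<le> 2 \<and> 0 < \<theta> \<and> \<theta> < 1 \<and> N \<ge> 1 \<longrightarrow>
            Cbar (\<theta> * \<alpha>1 + (1 - \<theta>) * \<alpha>2) N \<le> Cbar \<alpha>1 N powr \<theta> * Cbar \<alpha>2 N powr (1 - \<theta>))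
       \<and> (\<forall>(\<alpha>1::real) \<alpha>2 (N::nat). 0 \<le> \<alpha>1 \<and> \<alpha>1 < \<alpha>2 \<and> \<alpha>2 \<le> 1 \<and> N \<ge> 1 \<longrightarrow>
            Cbar \<alpha>1 N \<ge> Cbar \<alpha>2 N)
       \<and> (\<forall>\<alpha>::real. 0 \<le> \<alpha> \<and> \<alpha> < 1/2 \<longrightarrow>
            (\<exists>c>0. \<forall>N::nat. N \<ge> 2 \<longrightarrow> Cbar \<alpha> N \<ge> c * real N powr (1/2 - \<alpha>)))"
proof (intro conjI allI impI)
  fix \<alpha> :: real and N :: nat assume h: "0 \<le> \<alpha> \<and> \<alpha> \<le> 2 \<and> N \<ge> 2"
  show "Cbar \<alpha> N = Cbar (2 - \<alpha>) N" by (rule Cbar_sym)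
  show "Cbar \<alpha> N \<ge> 1" using Cbar_ge1 h by auto
next
  fix \<alpha>1 \<alpha>2 \<theta> :: real and N :: nat
  assume h: "0 \<le> \<alpha>1 \<and> \<alpha>1 < \<alpha>2 \<and> \<alpha>2 \<le> 2 \<and> 0 < \<theta> \<and> \<theta> < 1 \<and> N \<ge> 1"
  then show "Cbar (\<theta> * \<alpha>1 + (1 - \<theta>) * \<alpha>2) N \<le> Cbar \<alpha>1 N powr \<theta> * Cbar \<alpha>2 N powr (1 - \<theta>)"
    by (intro Cbar_interp) auto
next
  fix \<alpha>1 \<alpha>2 :: real and N :: nat
  assume h: "0 \<le> \<alpha>1 \<and> \<alpha>1 < \<alpha>2 \<and> \<alpha>2 \<le> 1 \<and> N \<ge> 1"
  then show "Cbar \<alpha>1 N \<ge> Cbar \<alpha>2 N" by (intro Cbar_mono) auto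
next
  fix \<alpha> :: real assume h: "0 \<le> \<alpha> \<and> \<alpha> < 1/2"
  show "\<exists>c>0. \<forall>N::nat. N \<ge> 2 \<longrightarrow> Cbar \<alpha> N \<ge> c * real N powr (1/2 - \<alpha>)"
    using Cbar_lower h by (intro exI[of _ "1/16"]) auto
qed

end
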